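(* Let $X$ be a Borel space, $\Theta$ a real Hilbert space, $D\subset\Theta$ open, $\mu$ a Borel probability measure on $X$, and $N:X\times\Theta\to\mathbb{R}^l$ such that $N(x,\theta)$ is measurable in $x$ and Fréchet differentiable in $\theta$ for all $(x,\theta)$, and $\int\|N(x,\theta)\|^2\,d\mu(x)<\infty$ for all $\theta\in\Theta$. Suppose there exist $\hat K_N,\hat L_N\in L^2(\mu)$ such that for $\mu$-almost every $x\in X$, $N(x,\cdot):\Theta\to\mathbb{R}^l$ satisfies $\|\partial_\theta N(x,\theta)\|\le\hat K_N(x)$ and $\|\partial_\theta N(x,\theta_1)-\partial_\theta N(x,\theta_2)\|\le\hat L_N(x)\|\theta_1-\theta_2\|$ for all $\theta,\theta_1,\theta_2\in D$. Then $N_\mu:\Theta\to L^2(\mu,\mathbb{R}^l)$ is Fréchet differentiable on $D$; for all $\theta\in D$ the Jacobian satisfies $\partial N_\mu(\theta)\eta=\partial_\theta N(\cdot,\theta)\eta$ for all $\eta\in\Theta$, and its adjoint satisfies \[ \partial N_\mu(\theta)^*f=\int\partial_\theta N(x,\theta)^*f(x)\,d\mu(x)\quad\text{for all }f\in L^2(\mu,\mathbb{R}^l); \] and $N_\mu$ is $\|\hat K_N\|_{L^2(\mu)}$-BJ and $\|\hat L_N\|_{L^2(\mu)}$-LJ on $D$. Furthermore, if there exists $\lambda_N>0$ such that \[ \int\bigl\langle\partial_\theta N(x_1,\theta)^*f(x_1),\partial_\theta N(x_2,\theta)^*f(x_2)\bigr\rangle\,d(\mu\otimes\mu)(x_1,x_2)\ge\lambda_N\|f\|^2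 \] for all $\theta\in D$ and $f\in L^2(\mu,\mathbb{R}^l)$, then $N_\mu$ is $\lambda_N$-UC on $D$.
   Context: $L^2(\mu,\mathbb{R}^l)$ is the Hilbert space of $\mu$-equivalence classes of square-integrable $\mathbb{R}^l$-valued functions with norm $\|f\|=(\int\|f(x)\|^2d\mu(x))^{1/2}$. The induced map $N_\mu:\Theta\to L^2(\mu,\mathbb{R}^l)$ sends $\theta$ to the equivalence class of $N(\cdot,\theta)$. $\partial_\theta N(x,\theta)\in\mathcal{L}(\Theta,\mathbb{R}^l)$ is the Fréchet derivative of $N(x,\cdot)$ at $\theta$, $\partial_\theta N(x,\theta)^*$ its adjoint. For a map $F:\Theta\to H$ between Hilbert spaces differentiable on $D$, with Fréchet derivative $\partial F$: $F$ is $K$-BJ on $D$ if $\|\partial F(\theta)\|\le K$ for $\theta\in D$; $L$-LJ on $D$ if $\|\partial F(\theta_1)-\partial F(\theta_2)\|\le L\|\theta_1-\theta_2\|$ for $\theta_1,\theta_2\in D$; $\lambda$-UC on $D$ ($\lambda>0$) if $\langle y,\partial F(\theta)\partial F(\theta)^*y\rangle\ge\lambda\|y\|^2$ for all $y\in H$, $\theta\in D$. *)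

theory Defs
  imports "HOL-Probability.Probability"
begin

text \<open>Square-integrable (Borel measurable) functions: representatives of elements of L^2(M, V).\<close>
definition sq_int :: "'a measure \<Rightarrow> ('a \<Rightarrow> 'c::real_normed_vector) \<Rightarrow> bool" where
  "sq_int M f \<longleftrightarrow> f \<in> borel_measurable M \<and> integrable M (\<lambda>x. (norm (f x))\<^sup>2)"

definition L2norm :: "'a measure \<Rightarrow> ('a \<Rightarrow> 'c::real_normed_vector) \<Rightarrow> real" where
  "L2norm M f = sqrt (\<integral>x. (norm (f x))\<^sup>2 \<partial>M)"

text \<open>Adjoint of the operator  eta |-> (x |-> A x eta)  from Theta to L^2(M, R^l):
  the unique g in Theta with  g . eta = <f, A eta>_{L^2}  for all eta.\<close>
definition L2_adjoint :: "'a measure \<Rightarrow> ('a \<Rightarrow> 'b::real_inner \<Rightarrow> 'c::real_inner) \<Rightarrow> ('a \<Rightarrow> 'c) \<Rightarrow> 'b" where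
  "L2_adjoint M A f = (THE g. \<forall>\<eta>. g \<bullet> \<eta> = (\<integral>x. f x \<bullet> A x \<eta> \<partial>M))"

end

theory Submission
  imports Defs
begin

lemma parallelogram_aux:
  fixes a b :: "'b::real_inner"
  shows "(norm (a - b))\<^sup>2 + (norm (a + b))\<^sup>2 = 2 * (norm a)\<^sup>2 + 2 * (norm b)\<^sup>2"
  by (simp add: power2_norm_eq_inner inner_diff_left inner_diff_right inner_add_left inner_add_right inner_commute algebra_simps)

lemma riesz_rep:
  fixes phi :: "'b::{real_inner,complete_space} \<Rightarrow> real"
  assumes bl: "bounded_linear phi"
  shows "\<exists>g. \<forall>\<eta>. phi \<eta> = g \<bullet> \<eta>"
proof (cases "\<forall>\<eta>. phi \<eta> = 0")
  case True then show ?thesis by (intro exI[of _ 0]) simp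
next
  case False
  interpret phi: bounded_linear phi by fact
  from False obtain u where u: "phi u \<noteq> 0" by auto
  define H where "H = {\<eta>. phi \<eta> = 1}"
  have u1: "u /\<^sub>R phi u \<in> H" using u by (simp add: H_def phi.scaleR)
  define d where "d = Inf ((\<lambda>\<eta>. (norm \<eta>)\<^sup>2) ` H)"
  have bdd: "bdd_below ((\<lambda>\<eta>. (norm \<eta>)\<^sup>2) ` H)" by (auto intro: bdd_belowI[of _ 0])
  have low: "d \<le> (norm \<eta>)\<^sup>2" if "\<eta> \<in> H" for \<eta>
    unfolding d_def using that bdd by (auto intro: cInf_lower)
  have "\<exists>y\<in>H. (norm y)\<^sup>2 < d + 1 / Suc n" for n
  proof -
    have "\<exists>z\<in>(\<lambda>\<eta>. (norm \<eta>)\<^sup>2) ` H. z < d + 1 / Suc n"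
      unfolding d_def using u1 by (intro cInf_lessD) auto
    then show ?thesis by auto
  qed
  then obtain x where xH: "\<And>n. x n \<in> H" and xb: "\<And>n. (norm (x n))\<^sup>2 < d + 1 / Suc n" by metis
  have par: "(norm (x n - x m))\<^sup>2 \<le> 2 / Suc n + 2 / Suc m" for n m
  proof -
    have "(x n + x m) /\<^sub>R 2 \<in> H" using xH[of n] xH[of m] by (simp add: H_def phi.scaleR phi.add)
    then have "d \<le> (norm ((x n + x m) /\<^sub>R 2))\<^sup>2" by (rule low)
    also have "\<dots> = (norm (x n + x m))\<^sup>2 / 4" by (simp add: power_divide)
    finally have "4 * d \<le> (norm (x n + x m))\<^sup>2" by simp
    then show ?thesis using parallelogram_aux[of "x n" "x m"] xb[of n] xb[of m] by linarith
  qed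
  have "Cauchy x"
  proof (rule metric_CauchyI)
    fix e :: real assume e: "e > 0"
    obtain M :: nat where M: "4 / e\<^sup>2 < M" using reals_Archimedean2 by blast
    have e2: "0 < e\<^sup>2" using e by simp
    have M1: "4 < real M * e\<^sup>2" using M e2 by (simp add: field_simps)
    have "real (Suc M) * e\<^sup>2 = real M * e\<^sup>2 + e\<^sup>2" by (simp add: algebra_simps)
    then have "4 < real (Suc M) * e\<^sup>2" using M1 e2 by linarith
    then have "4 < e\<^sup>2 * real (Suc M)" by (simp add: mult.commute)
    then have M': "4 / Suc M < e\<^sup>2" by (simp add: pos_divide_less_eq)
    show "\<exists>M. \<forall>m\<ge>M. \<forall>n\<ge>M. dist (x m) (x n) < e"
    proof (intro exI allI impI)
      fix m n assume mn: "M \<le> m" "M \<le> n"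
      have "2 / Suc m \<le> 2 / Suc M" "2 / Suc n \<le> 2 / Suc M" using mn by (auto simp: frac_le)
      then have "(dist (x m) (x n))\<^sup>2 < e\<^sup>2" using par[of m n] M' by (simp add: dist_norm)
      then show "dist (x m) (x n) < e" using e by (simp add: power_less_imp_less_base)
    qed
  qed
  then obtain g0 where g0: "x \<longlonglongrightarrow> g0" using Cauchy_convergent_iff convergent_def by blast
  have "(\<lambda>n. phi (x n)) \<longlonglongrightarrow> phi g0" using g0 by (rule phi.tendsto)
  moreover have "(\<lambda>n. phi (x n)) = (\<lambda>n. 1)" using xH by (auto simp: H_def)
  ultimately have "(\<lambda>n. 1::real) \<longlonglongrightarrow> phi g0" by simp
  then have pg0: "phi g0 = 1" by (simp add: LIMSEQ_const_iff)
  have ng0: "(norm g0)\<^sup>2 \<le> d"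
  proof (rule tendsto_le[OF trivial_limit_sequentially])
    show "(\<lambda>n. (norm (x n))\<^sup>2) \<longlonglongrightarrow> (norm g0)\<^sup>2" using g0 by (intro tendsto_intros)
    have "(\<lambda>n. 1 / real (Suc n)) \<longlonglongrightarrow> 0" using LIMSEQ_inverse_real_of_nat by (simp add: inverse_eq_divide)
    then show "(\<lambda>n. d + 1 / real (Suc n)) \<longlonglongrightarrow> d" using tendsto_add[of "\<lambda>_. d" d sequentially] by fastforce
    show "\<forall>\<^sub>F n in sequentially. (norm (x n))\<^sup>2 \<le> d + 1 / real (Suc n)" using xb by (intro always_eventually allI less_imp_le) blast
  qed
  have orth: "g0 \<bullet> k = 0" if k: "phi k = 0" for k
  proof (rule ccontr)
    assume c: "g0 \<bullet> k \<noteq> 0"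
    then have k0: "k \<noteq> 0" by auto
    define t where "t = - (g0 \<bullet> k) / (k \<bullet> k)"
    have "g0 + t *\<^sub>R k \<in> H" using pg0 k by (simp add: H_def phi.add phi.scaleR)
    then have A: "d \<le> (norm (g0 + t *\<^sub>R k))\<^sup>2" by (rule low)
    have B1: "(norm (g0 + t *\<^sub>R k))\<^sup>2 = (g0 + t *\<^sub>R k) \<bullet> (g0 + t *\<^sub>R k)" by (simp add: power2_norm_eq_inner)
    have B2: "(g0 + t *\<^sub>R k) \<bullet> (g0 + t *\<^sub>R k) = g0 \<bullet> g0 + (2 * t * (g0 \<bullet> k) + t\<^sup>2 * (k \<bullet> k))"
      by (simp add: inner_add_left inner_add_right inner_commute power2_eq_square algebra_simps)
    have B3: "g0 \<bullet> g0 = (norm g0)\<^sup>2" by (simp add: power2_norm_eq_inner)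
    have C: "2 * t * (g0 \<bullet> k) + t\<^sup>2 * (k \<bullet> k) = - (g0 \<bullet> k)\<^sup>2 / (k \<bullet> k)"
      using k0 by (simp add: t_def power2_eq_square field_simps)
    have "0 \<le> - (g0 \<bullet> k)\<^sup>2 / (k \<bullet> k)" using A B1 B2 B3 C ng0 by linarith
    moreover have "(g0 \<bullet> k)\<^sup>2 / (k \<bullet> k) > 0" using c k0 by (simp add: divide_pos_pos)
    ultimately show False by linarith
  qed
  have g00: "g0 \<noteq> 0" using pg0 by auto
  show ?thesis
  proof (intro exI allI)
    fix \<eta>
    have "phi (\<eta> - phi \<eta> *\<^sub>R g0) = 0" using pg0 by (simp add: phi.diff phi.scaleR)
    then have "g0 \<bullet> (\<eta> - phi \<eta> *\<^sub>R g0) = 0" by (rule orth)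
    then have "g0 \<bullet> \<eta> = phi \<eta> * (g0 \<bullet> g0)" by (simp add: inner_diff_right)
    moreover have "g0 \<bullet> g0 \<noteq> 0" using g00 by simp
    ultimately show "phi \<eta> = (g0 /\<^sub>R (g0 \<bullet> g0)) \<bullet> \<eta>" by (simp add: field_simps)
  qed
qed


lemma adjoint_hilbert:
  fixes A :: "'b::{real_inner,complete_space} \<Rightarrow> real ^ 'l::finite"
  assumes bl: "bounded_linear A"
  shows "A x \<bullet> y = x \<bullet> adjoint A y"
proof -
  have "\<forall>y. \<exists>g. \<forall>x. A x \<bullet> y = g \<bullet> x"
  proof
    fix y
    have "bounded_linear (\<lambda>x. A x \<bullet> y)"
      using bounded_linear_compose[OF bounded_linear_inner_left[of y] bl] by simp
    from riesz_rep[OF this] show "\<exists>g. \<forall>x. A x \<bullet> y = g \<bullet> x" .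
  qed
  then obtain G where G: "\<And>y x. A x \<bullet> y = G y \<bullet> x" by metis
  then have ex: "\<exists>f'. \<forall>x y. A x \<bullet> y = x \<bullet> f' y" by (metis inner_commute)
  show ?thesis unfolding adjoint_def using someI_ex[OF ex] by blast
qed

lemma inner_sq_bound:
  fixes u v :: "'c::real_inner"
  shows "\<bar>u \<bullet> v\<bar> \<le> (norm u)\<^sup>2 + (norm v)\<^sup>2"
proof -
  have "0 \<le> (norm u - norm v)\<^sup>2" by simp
  then have "2 * (norm u * norm v) \<le> (norm u)\<^sup>2 + (norm v)\<^sup>2" by (simp add: power2_diff)
  moreover have "0 \<le> norm u * norm v" by simp
  moreover have "\<bar>u \<bullet> v\<bar> \<le> norm u * norm v" by (rule Cauchy_Schwarz_ineq2)
  ultimately show ?thesis by linarith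
qed

lemma deriv_measurable:
  fixes N :: "'a \<Rightarrow> 'b::real_normed_vector \<Rightarrow> 'c::{real_normed_vector, second_countable_topology}"
  assumes meas: "\<And>\<theta>. (\<lambda>x. N x \<theta>) \<in> borel_measurable M"
    and deriv: "\<And>x \<theta>. (N x has_derivative N' x \<theta>) (at \<theta>)"
  shows "(\<lambda>x. N' x \<theta> \<eta>) \<in> borel_measurable M"
proof (cases "\<eta> = 0")
  case True
  have "N' x \<theta> 0 = 0" for x using has_derivative_bounded_linear[OF deriv] linear_simps(3) by blast
  then show ?thesis using True by simp
next
  case False
  define h where "h = (\<lambda>n. \<eta> /\<^sub>R real (Suc n))"
  define F where "F n x = real (Suc n) *\<^sub>R (N x (\<theta> + h n) - N x \<theta>)" for n x
  have Fm: "F n \<in> borel_measurable M" for n unfolding F_def using meas by measurable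
  have hlim: "filterlim h (at 0) sequentially"
  proof (subst filterlim_at, intro conjI)
    show "\<forall>\<^sub>F n in sequentially. h n \<in> UNIV \<and> h n \<noteq> 0" using False by (auto simp: h_def)
    have "(\<lambda>n. inverse (real (Suc n)) *\<^sub>R \<eta>) \<longlonglongrightarrow> 0 *\<^sub>R \<eta>"
      by (intro tendsto_intros LIMSEQ_inverse_real_of_nat)
    then show "h \<longlonglongrightarrow> 0" by (simp add: h_def)
  qed
  show ?thesis
  proof (rule borel_measurable_LIMSEQ_metric[OF Fm])
    fix x
    interpret bl: bounded_linear "N' x \<theta>" using has_derivative_bounded_linear[OF deriv] .
    have lim0: "((\<lambda>k. norm (N x (\<theta> + k) - N x \<theta> - N' x \<theta> k) / norm k) \<longlongrightarrow> 0) (at 0)"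
      using deriv[of x \<theta>] by (simp add: has_derivative_at)
    have c: "((\<lambda>n. norm (N x (\<theta> + h n) - N x \<theta> - N' x \<theta> (h n)) / norm (h n)) \<longlongrightarrow> 0) sequentially"
      using filterlim_compose[OF lim0 hlim] by simp
    have eq: "norm (F n x - N' x \<theta> \<eta>) = norm \<eta> * (norm (N x (\<theta> + h n) - N x \<theta> - N' x \<theta> (h n)) / norm (h n))" for n
    proof -
      have "F n x - N' x \<theta> \<eta> = real (Suc n) *\<^sub>R (N x (\<theta> + h n) - N x \<theta> - N' x \<theta> (h n))"
        by (simp add: F_def h_def bl.scaleR scaleR_diff_right)
      then have e2: "norm (F n x - N' x \<theta> \<eta>) = real (Suc n) * norm (N x (\<theta> + h n) - N x \<theta> - N' x \<theta> (h n))"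
        by (simp del: of_nat_Suc)
      have e3: "norm (h n) = norm \<eta> / real (Suc n)" by (simp add: h_def divide_inverse mult.commute del: of_nat_Suc)
      have nz: "norm \<eta> \<noteq> 0" using False by simp
      show ?thesis unfolding e2 e3 using nz by (simp add: field_simps del: of_nat_Suc)
    qed
    have "(\<lambda>n. norm (F n x - N' x \<theta> \<eta>)) \<longlonglongrightarrow> 0"
      unfolding eq using tendsto_mult_right_zero[OF c] by simp
    then have "(\<lambda>n. F n x - N' x \<theta> \<eta>) \<longlonglongrightarrow> 0" by (rule tendsto_norm_zero_cancel)
    then show "(\<lambda>n. F n x) \<longlonglongrightarrow> N' x \<theta> \<eta>" by (simp add: LIM_zero_iff)
  qed
qed

lemma L2_bound:
  fixes g :: "'a \<Rightarrow> 'c::{banach,second_countable_topology}" and k :: "'a \<Rightarrow> real"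
  assumes gm: "g \<in> borel_measurable M" and k: "sq_int M k"
    and b: "AE x in M. norm (g x) \<le> k x * c" and c: "0 \<le> c"
  shows "sq_int M g \<and> L2norm M g \<le> L2norm M k * c"
proof -
  have km: "k \<in> borel_measurable M" and ki: "integrable M (\<lambda>x. (k x)\<^sup>2)"
    using k by (auto simp: sq_int_def)
  have ki2: "integrable M (\<lambda>x. (k x)\<^sup>2 * c\<^sup>2)" using ki by simp
  have b2: "AE x in M. (norm (g x))\<^sup>2 \<le> (k x)\<^sup>2 * c\<^sup>2"
    using b
  proof eventually_elim
    case (elim x)
    have "(norm (g x))\<^sup>2 \<le> (k x * c)\<^sup>2" using elim by (intro power_mono) auto
    then show ?case by (simp add: power_mult_distrib)
  qed
  have gi: "integrable M (\<lambda>x. (norm (g x))\<^sup>2)"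
  proof (rule Bochner_Integration.integrable_bound[OF ki2])
    show "(\<lambda>x. (norm (g x))\<^sup>2) \<in> borel_measurable M" using gm by measurable
    show "AE x in M. norm ((norm (g x))\<^sup>2) \<le> norm ((k x)\<^sup>2 * c\<^sup>2)"
      using b2 by eventually_elim auto
  qed
  have "(\<integral>x. (norm (g x))\<^sup>2 \<partial>M) \<le> (\<integral>x. (k x)\<^sup>2 * c\<^sup>2 \<partial>M)"
    by (rule integral_mono_AE[OF gi ki2 b2])
  also have "\<dots> = (\<integral>x. (k x)\<^sup>2 \<partial>M) * c\<^sup>2" by simp
  finally have "sqrt (\<integral>x. (norm (g x))\<^sup>2 \<partial>M) \<le> sqrt ((\<integral>x. (k x)\<^sup>2 \<partial>M) * c\<^sup>2)"
    by (rule real_sqrt_le_mono)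
  also have "\<dots> = sqrt (\<integral>x. (k x)\<^sup>2 \<partial>M) * c" using c by (simp add: real_sqrt_mult)
  finally show ?thesis using gm gi by (simp add: sq_int_def L2norm_def)
qed

lemma inner_ext_eq:
  fixes a b :: "'b::real_inner"
  assumes "\<And>\<eta>. a \<bullet> \<eta> = b \<bullet> \<eta>"
  shows "a = b"
proof -
  have "(a - b) \<bullet> (a - b) = 0" using assms[of "a - b"] by (simp add: inner_diff_left)
  then show ?thesis by simp
qed

theorem lemma3:
  fixes M :: "'a measure"
    and N :: "'a \<Rightarrow> 'b::{real_inner, complete_space} \<Rightarrow> real ^ 'l::finite"
    and N' :: "'a \<Rightarrow> 'b \<Rightarrow> 'b \<Rightarrow> real ^ 'l"
    and D :: "'b set"
    and K L :: "'a \<Rightarrow> real"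
  assumes prob: "prob_space M"
    and openD: "open D"
    and meas: "\<And>\<theta>. (\<lambda>x. N x \<theta>) \<in> borel_measurable M"
    and deriv: "\<And>x \<theta>. (N x has_derivative N' x \<theta>) (at \<theta>)"
    and sqint: "\<And>\<theta>. integrable M (\<lambda>x. (norm (N x \<theta>))\<^sup>2)"
    and K_L2: "sq_int M K"
    and L_L2: "sq_int M L"
    and bounds: "AE x in M.
        (\<forall>\<theta>\<in>D. onorm (N' x \<theta>) \<le> K x) \<and>
        (\<forall>\<theta>1\<in>D. \<forall>\<theta>2\<in>D. onorm (\<lambda>\<eta>. N' x \<theta>1 \<eta> - N' x \<theta>2 \<eta>) \<le> L x * norm (\<theta>1 - \<theta>2))"
  shows
    \<comment> \<open>Frechet differentiability of N_mu on D with derivative eta |-> N'(.,theta) eta into L^2\<close>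
    "(\<forall>\<theta>\<in>D.
        (\<forall>\<eta>. sq_int M (\<lambda>x. N' x \<theta> \<eta>)) \<and>
        ((\<lambda>h. L2norm M (\<lambda>x. N x (\<theta> + h) - N x \<theta> - N' x \<theta> h) / norm h) \<longlongrightarrow> 0) (at 0))
     \<comment> \<open>adjoint formula (integral in the weak/Pettis sense)\<close>
   \<and> (\<forall>\<theta>\<in>D. \<forall>f. sq_int M f \<longrightarrow>
        (\<forall>\<eta>. L2_adjoint M (\<lambda>x. N' x \<theta>) f \<bullet> \<eta> = (\<integral>x. f x \<bullet> N' x \<theta> \<eta> \<partial>M)) \<and>
        (\<forall>\<eta>. integrable M (\<lambda>x. adjoint (N' x \<theta>) (f x) \<bullet> \<eta>) \<and>
              L2_adjoint M (\<lambda>x. N' x \<theta>) f \<bullet> \<eta> = (\<integral>x. adjoint (N' x \<theta>) (f x) \<bullet> \<eta> \<partial>M)))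
     \<comment> \<open>BJ with constant ||K||_{L^2}\<close>
   \<and> (\<forall>\<theta>\<in>D. \<forall>\<eta>. L2norm M (\<lambda>x. N' x \<theta> \<eta>) \<le> L2norm M K * norm \<eta>)
     \<comment> \<open>LJ with constant ||L||_{L^2}\<close>
   \<and> (\<forall>\<theta>1\<in>D. \<forall>\<theta>2\<in>D. \<forall>\<eta>.
        L2norm M (\<lambda>x. N' x \<theta>1 \<eta> - N' x \<theta>2 \<eta>) \<le> L2norm M L * norm (\<theta>1 - \<theta>2) * norm \<eta>)
     \<comment> \<open>UC\<close>
   \<and> (\<forall>lam>0.
        (\<forall>\<theta>\<in>D. \<forall>f. sq_int M f \<longrightarrow>
           (\<integral>z. adjoint (N' (fst z) \<theta>) (f (fst z)) \<bullet> adjoint (N' (snd z) \<theta>) (f (snd z)) \<partial>(M \<Otimes>\<^sub>M M))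
             \<ge> lam * (L2norm M f)\<^sup>2)
        \<longrightarrow> (\<forall>\<theta>\<in>D. \<forall>f. sq_int M f \<longrightarrow>
           (\<integral>x. f x \<bullet> N' x \<theta> (L2_adjoint M (\<lambda>x. N' x \<theta>) f) \<partial>M) \<ge> lam * (L2norm M f)\<^sup>2))"
proof -
  interpret P: prob_space M by (rule prob)
  have bl: "\<And>x \<theta>. bounded_linear (N' x \<theta>)" using deriv has_derivative_bounded_linear by blast
  have Nadd: "\<And>x \<theta> a b. N' x \<theta> (a + b) = N' x \<theta> a + N' x \<theta> b"
    using bl by (simp add: linear_simps bounded_linear.linear)
  have Nscale: "\<And>x \<theta> r a. N' x \<theta> (r *\<^sub>R a) = r *\<^sub>R N' x \<theta> a"
    using bl by (simp add: linear_simps bounded_linear.linear)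
  have N'm: "\<And>\<theta> \<eta>. (\<lambda>x. N' x \<theta> \<eta>) \<in> borel_measurable M"
    using deriv_measurable[of N M N'] meas deriv by blast
  have Kb: "AE x in M. \<forall>\<theta>\<in>D. \<forall>\<eta>. norm (N' x \<theta> \<eta>) \<le> K x * norm \<eta>"
    using bounds
  proof eventually_elim
    case (elim x)
    show ?case
    proof (intro ballI allI)
      fix \<theta> \<eta> :: 'b assume "\<theta> \<in> D"
      then have "onorm (N' x \<theta>) \<le> K x" using elim by blast
      then have "onorm (N' x \<theta>) * norm \<eta> \<le> K x * norm \<eta>" by (rule mult_right_mono) simp
      then show "norm (N' x \<theta> \<eta>) \<le> K x * norm \<eta>" using onorm[OF bl[of x \<theta>], of \<eta>] by linarith
    qed
  qed
  have Lb: "AE x in M. \<forall>\<theta>1\<in>D. \<forall>\<theta>2\<in>D. \<forall>\<eta>. norm (N' x \<theta>1 \<eta> - N' x \<theta>2 \<eta>) \<le> L x * norm (\<theta>1 - \<theta>2) * norm \<eta>"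
    using bounds
  proof eventually_elim
    case (elim x)
    show ?case
    proof (intro ballI allI)
      fix \<theta>1 \<theta>2 \<eta> :: 'b assume "\<theta>1 \<in> D" "\<theta>2 \<in> D"
      then have "onorm (\<lambda>\<eta>. N' x \<theta>1 \<eta> - N' x \<theta>2 \<eta>) \<le> L x * norm (\<theta>1 - \<theta>2)" using elim by blast
      then have "onorm (\<lambda>\<eta>. N' x \<theta>1 \<eta> - N' x \<theta>2 \<eta>) * norm \<eta> \<le> L x * norm (\<theta>1 - \<theta>2) * norm \<eta>"
        by (rule mult_right_mono) simp
      moreover have "bounded_linear (\<lambda>\<eta>. N' x \<theta>1 \<eta> - N' x \<theta>2 \<eta>)"
        using bl by (intro bounded_linear_sub) auto
      ultimately show "norm (N' x \<theta>1 \<eta> - N' x \<theta>2 \<eta>) \<le> L x * norm (\<theta>1 - \<theta>2) * norm \<eta>"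
        using onorm[of "\<lambda>\<eta>. N' x \<theta>1 \<eta> - N' x \<theta>2 \<eta>" \<eta>] by linarith
    qed
  qed
  have BJ: "sq_int M (\<lambda>x. N' x \<theta> \<eta>) \<and> L2norm M (\<lambda>x. N' x \<theta> \<eta>) \<le> L2norm M K * norm \<eta>"
    if "\<theta> \<in> D" for \<theta> \<eta>
    by (rule L2_bound[OF N'm K_L2]) (use Kb that in auto)
  have LJ: "L2norm M (\<lambda>x. N' x \<theta>1 \<eta> - N' x \<theta>2 \<eta>) \<le> L2norm M L * norm (\<theta>1 - \<theta>2) * norm \<eta>"
    if "\<theta>1 \<in> D" "\<theta>2 \<in> D" for \<theta>1 \<theta>2 \<eta>
  proof -
    have "sq_int M (\<lambda>x. N' x \<theta>1 \<eta> - N' x \<theta>2 \<eta>) \<and>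
      L2norm M (\<lambda>x. N' x \<theta>1 \<eta> - N' x \<theta>2 \<eta>) \<le> L2norm M L * (norm (\<theta>1 - \<theta>2) * norm \<eta>)"
      by (rule L2_bound[OF _ L_L2]) (use Lb that N'm in \<open>auto simp: mult.assoc\<close>)
    then show ?thesis by (simp add: mult.assoc)
  qed
  have absL: "sq_int M (\<lambda>x. \<bar>L x\<bar>)" and absL2: "L2norm M (\<lambda>x. \<bar>L x\<bar>) = L2norm M L"
    using L_L2 by (auto simp: sq_int_def L2norm_def)
  have FR: "((\<lambda>h. L2norm M (\<lambda>x. N x (\<theta> + h) - N x \<theta> - N' x \<theta> h) / norm h) \<longlongrightarrow> 0) (at 0)"
    if th: "\<theta> \<in> D" for \<theta>
  proof -
    obtain r where r: "r > 0" "ball \<theta> r \<subseteq> D" using openD th open_contains_ball by blast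
    have rem: "L2norm M (\<lambda>x. N x (\<theta> + h) - N x \<theta> - N' x \<theta> h) \<le> L2norm M L * norm h * norm h"
      if hr: "norm h < r" for h
    proof -
      have sub: "cball \<theta> (norm h) \<subseteq> D" proof -
        have "cball \<theta> (norm h) \<subseteq> ball \<theta> r" using hr by (auto simp: subset_eq)
        then show ?thesis using r(2) by blast
      qed
      have "AE x in M. norm (N x (\<theta> + h) - N x \<theta> - N' x \<theta> h) \<le> \<bar>L x\<bar> * (norm h * norm h)"
        using bounds
      proof eventually_elim
        case (elim x)
        define f where "f = (\<lambda>y. N x y - N' x \<theta> y)"
        interpret bt: bounded_linear "N' x \<theta>" by (rule bl)
        have "norm (f (\<theta> + h) - f \<theta>) \<le> (\<bar>L x\<bar> * norm h) * norm ((\<theta> + h) - \<theta>)"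
        proof (rule differentiable_bound[where S="cball \<theta> (norm h)" and f' = "\<lambda>y \<eta>. N' x y \<eta> - N' x \<theta> \<eta>"])
          show "convex (cball \<theta> (norm h))" by simp
          show "\<theta> + h \<in> cball \<theta> (norm h)" by (simp add: dist_norm)
          show "\<theta> \<in> cball \<theta> (norm h)" by simp
          fix y assume y: "y \<in> cball \<theta> (norm h)"
          show "(f has_derivative (\<lambda>\<eta>. N' x y \<eta> - N' x \<theta> \<eta>)) (at y within cball \<theta> (norm h))"
            unfolding f_def
            by (rule has_derivative_at_withinI, rule has_derivative_diff[OF deriv bounded_linear_imp_has_derivative[OF bl]])
          have yD: "y \<in> D" using y sub by blast
          have "onorm (\<lambda>\<eta>. N' x y \<eta> - N' x \<theta> \<eta>) \<le> L x * norm (y - \<theta>)" using elim yD th by blast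
          also have "\<dots> \<le> \<bar>L x\<bar> * norm h"
          proof -
            have "norm (y - \<theta>) \<le> norm h" using y by (simp add: dist_norm norm_minus_commute)
            then show ?thesis by (intro mult_mono) auto
          qed
          finally show "onorm (\<lambda>\<eta>. N' x y \<eta> - N' x \<theta> \<eta>) \<le> \<bar>L x\<bar> * norm h" .
        qed
        moreover have "f (\<theta> + h) - f \<theta> = N x (\<theta> + h) - N x \<theta> - N' x \<theta> h"
          by (simp add: f_def bt.add algebra_simps)
        ultimately show ?case by (simp add: mult.assoc)
      qed
      then have "sq_int M (\<lambda>x. N x (\<theta> + h) - N x \<theta> - N' x \<theta> h) \<and>
          L2norm M (\<lambda>x. N x (\<theta> + h) - N x \<theta> - N' x \<theta> h) \<le> L2norm M (\<lambda>x. \<bar>L x\<bar>) * (norm h * norm h)"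
        by (intro L2_bound[OF _ absL]) (use meas N'm in auto)
      then show ?thesis by (simp add: absL2 mult.assoc)
    qed
    show ?thesis
    proof (rule tendsto_sandwich[where f="\<lambda>_. 0" and h="\<lambda>h. L2norm M L * norm h"])
      show "\<forall>\<^sub>F h in at 0. 0 \<le> L2norm M (\<lambda>x. N x (\<theta> + h) - N x \<theta> - N' x \<theta> h) / norm h"
        by (intro always_eventually allI divide_nonneg_nonneg) (auto simp: L2norm_def)
      show "\<forall>\<^sub>F h in at 0. L2norm M (\<lambda>x. N x (\<theta> + h) - N x \<theta> - N' x \<theta> h) / norm h \<le> L2norm M L * norm h"
      proof -
        have "\<forall>h. h \<noteq> 0 \<and> dist h 0 < r \<longrightarrow> L2norm M (\<lambda>x. N x (\<theta> + h) - N x \<theta> - N' x \<theta> h) / norm h \<le> L2norm M L * norm h"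
        proof (intro allI impI)
          fix h :: 'b assume h: "h \<noteq> 0 \<and> dist h 0 < r"
          then have "L2norm M (\<lambda>x. N x (\<theta> + h) - N x \<theta> - N' x \<theta> h) \<le> L2norm M L * norm h * norm h"
            by (intro rem) simp
          then show "L2norm M (\<lambda>x. N x (\<theta> + h) - N x \<theta> - N' x \<theta> h) / norm h \<le> L2norm M L * norm h"
            using h by (simp add: divide_le_eq)
        qed
        then show ?thesis unfolding eventually_at using r(1) by blast
      qed
      show "((\<lambda>_. 0) \<longlongrightarrow> 0) (at 0)" by simp
      have nz: "((\<lambda>h. norm h) \<longlongrightarrow> 0) (at (0::'b))" by (rule tendsto_norm_zero[OF tendsto_ident_at])
      show "((\<lambda>h. L2norm M L * norm h) \<longlongrightarrow> 0) (at (0::'b))" using tendsto_mult_right_zero[OF nz, of "L2norm M L"] by simp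
    qed
  qed
  have ADJ: "(\<forall>\<eta>. L2_adjoint M (\<lambda>x. N' x \<theta>) f \<bullet> \<eta> = (\<integral>x. f x \<bullet> N' x \<theta> \<eta> \<partial>M)) \<and>
        (\<forall>\<eta>. integrable M (\<lambda>x. adjoint (N' x \<theta>) (f x) \<bullet> \<eta>) \<and>
              L2_adjoint M (\<lambda>x. N' x \<theta>) f \<bullet> \<eta> = (\<integral>x. adjoint (N' x \<theta>) (f x) \<bullet> \<eta> \<partial>M))"
    if th: "\<theta> \<in> D" and f: "sq_int M f" for \<theta> f
  proof -
    have fm: "f \<in> borel_measurable M" and fi: "integrable M (\<lambda>x. (norm (f x))\<^sup>2)"
      using f by (auto simp: sq_int_def)
    have Km: "K \<in> borel_measurable M" and Ki: "integrable M (\<lambda>x. (K x)\<^sup>2)"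
      using K_L2 by (auto simp: sq_int_def)
    have intg: "integrable M (\<lambda>x. f x \<bullet> N' x \<theta> \<eta>)" for \<eta>
    proof (rule Bochner_Integration.integrable_bound)
      show "integrable M (\<lambda>x. (norm (f x))\<^sup>2 + (norm (N' x \<theta> \<eta>))\<^sup>2)"
        using fi BJ[OF th, of \<eta>] by (auto simp: sq_int_def)
      show "(\<lambda>x. f x \<bullet> N' x \<theta> \<eta>) \<in> borel_measurable M" using fm N'm by measurable
      show "AE x in M. norm (f x \<bullet> N' x \<theta> \<eta>) \<le> norm ((norm (f x))\<^sup>2 + (norm (N' x \<theta> \<eta>))\<^sup>2)"
        using inner_sq_bound by (auto intro!: always_eventually)
    qed
    have fKi: "integrable M (\<lambda>x. norm (f x) * \<bar>K x\<bar>)"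
    proof (rule Bochner_Integration.integrable_bound)
      show "integrable M (\<lambda>x. (norm (f x))\<^sup>2 + (K x)\<^sup>2)" using fi Ki by auto
      show "(\<lambda>x. norm (f x) * \<bar>K x\<bar>) \<in> borel_measurable M" using fm Km by measurable
      show "AE x in M. norm (norm (f x) * \<bar>K x\<bar>) \<le> norm ((norm (f x))\<^sup>2 + (K x)\<^sup>2)"
        using inner_sq_bound[of "norm (f x)" "K x" for x] by (auto intro!: always_eventually simp: abs_mult)
    qed
    define phi where "phi = (\<lambda>\<eta>. \<integral>x. f x \<bullet> N' x \<theta> \<eta> \<partial>M)"
    have "bounded_linear phi"
    proof (rule bounded_linear_intro[where K="\<integral>x. norm (f x) * \<bar>K x\<bar> \<partial>M"])
      fix a b
      have "(\<lambda>x. f x \<bullet> N' x \<theta> (a + b)) = (\<lambda>x. f x \<bullet> N' x \<theta> a + f x \<bullet> N' x \<theta> b)"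
        by (simp add: Nadd inner_add_right)
      then show "phi (a + b) = phi a + phi b" unfolding phi_def using intg by simp
    next
      fix r a
      have "(\<lambda>x. f x \<bullet> N' x \<theta> (r *\<^sub>R a)) = (\<lambda>x. r * (f x \<bullet> N' x \<theta> a))"
        by (simp add: Nscale)
      then show "phi (r *\<^sub>R a) = r *\<^sub>R phi a" unfolding phi_def by simp
    next
      fix \<eta>
      have "norm (phi \<eta>) \<le> (\<integral>x. norm (f x \<bullet> N' x \<theta> \<eta>) \<partial>M)" unfolding phi_def by (rule integral_norm_bound)
      also have "\<dots> \<le> (\<integral>x. norm (f x) * \<bar>K x\<bar> * norm \<eta> \<partial>M)"
      proof (rule integral_mono_AE)
        show "integrable M (\<lambda>x. norm (f x \<bullet> N' x \<theta> \<eta>))" using intg by auto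
        show "integrable M (\<lambda>x. norm (f x) * \<bar>K x\<bar> * norm \<eta>)" using fKi by auto
        show "AE x in M. norm (f x \<bullet> N' x \<theta> \<eta>) \<le> norm (f x) * \<bar>K x\<bar> * norm \<eta>"
          using Kb
        proof eventually_elim
          case (elim x)
          have "norm (f x \<bullet> N' x \<theta> \<eta>) \<le> norm (f x) * norm (N' x \<theta> \<eta>)"
            by (simp add: Cauchy_Schwarz_ineq2)
          also have "\<dots> \<le> norm (f x) * (\<bar>K x\<bar> * norm \<eta>)"
            using elim th by (intro mult_left_mono) (auto intro: order_trans[OF _ mult_right_mono[OF abs_ge_self]])
          finally show ?case by (simp add: mult.assoc)
        qed
      qed
      also have "\<dots> = norm \<eta> * (\<integral>x. norm (f x) * \<bar>K x\<bar> \<partial>M)" by (simp add: mult.commute)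
      finally show "norm (phi \<eta>) \<le> norm \<eta> * (\<integral>x. norm (f x) * \<bar>K x\<bar> \<partial>M)" .
    qed
    from riesz_rep[OF this] obtain g where g: "\<And>\<eta>. phi \<eta> = g \<bullet> \<eta>" by blast
    have g': "g \<bullet> \<eta> = (\<integral>x. f x \<bullet> N' x \<theta> \<eta> \<partial>M)" for \<eta>
      using g[of \<eta>] unfolding phi_def by (rule sym)
    have Lg: "L2_adjoint M (\<lambda>x. N' x \<theta>) f = g"
      unfolding L2_adjoint_def
    proof (rule the_equality)
      show "\<forall>\<eta>. g \<bullet> \<eta> = (\<integral>x. f x \<bullet> N' x \<theta> \<eta> \<partial>M)" using g' by blast
      fix g' assume a: "\<forall>\<eta>. g' \<bullet> \<eta> = (\<integral>x. f x \<bullet> N' x \<theta> \<eta> \<partial>M)"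
      show "g' = g"
      proof (rule inner_ext_eq)
        fix \<eta> show "g' \<bullet> \<eta> = g \<bullet> \<eta>" using a g'[of \<eta>] by simp
      qed
    qed
    have aeq1: "adjoint (N' x \<theta>) (f x) \<bullet> \<eta> = f x \<bullet> N' x \<theta> \<eta>" for x \<eta>
      using adjoint_hilbert[OF bl[of x \<theta>], of \<eta> "f x"] by (metis inner_commute)
    have aeq: "(\<lambda>x. adjoint (N' x \<theta>) (f x) \<bullet> \<eta>) = (\<lambda>x. f x \<bullet> N' x \<theta> \<eta>)" for \<eta>
      using aeq1 by blast
    show ?thesis unfolding Lg aeq using g' intg by blast
  qed
  have UC: "(\<integral>x. f x \<bullet> N' x \<theta> (L2_adjoint M (\<lambda>x. N' x \<theta>) f) \<partial>M) \<ge> lam * (L2norm M f)\<^sup>2"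
    if hyp: "(\<integral>z. adjoint (N' (fst z) \<theta>) (f (fst z)) \<bullet> adjoint (N' (snd z) \<theta>) (f (snd z)) \<partial>(M \<Otimes>\<^sub>M M))
             \<ge> lam * (L2norm M f)\<^sup>2" and th: "\<theta> \<in> D" and f: "sq_int M f" for lam \<theta> f
  proof -
    define g where "g = L2_adjoint M (\<lambda>x. N' x \<theta>) f"
    define a where "a = (\<lambda>x. adjoint (N' x \<theta>) (f x))"
    have A1: "\<And>\<eta>. g \<bullet> \<eta> = (\<integral>x. f x \<bullet> N' x \<theta> \<eta> \<partial>M)"
      and A2: "\<And>\<eta>. g \<bullet> \<eta> = (\<integral>x. a x \<bullet> \<eta> \<partial>M)"
      using ADJ[OF th f] by (auto simp: g_def a_def)
    have lhs: "(\<integral>x. f x \<bullet> N' x \<theta> g \<partial>M) = g \<bullet> g" using A1[of g] by simp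
    have "lam * (L2norm M f)\<^sup>2 \<le> g \<bullet> g"
    proof (cases "integrable (M \<Otimes>\<^sub>M M) (\<lambda>z. a (fst z) \<bullet> a (snd z))")
      case True
      interpret PP: pair_prob_space M M by unfold_locales
      have "(\<integral>z. a (fst z) \<bullet> a (snd z) \<partial>(M \<Otimes>\<^sub>M M)) = (\<integral>x. (\<integral>y. a x \<bullet> a y \<partial>M) \<partial>M)"
        using PP.integral_fst'[OF True] by simp
      also have "\<dots> = (\<integral>x. a x \<bullet> g \<partial>M)"
      proof (rule Bochner_Integration.integral_cong[OF refl])
        fix x
        have "(\<lambda>y. a x \<bullet> a y) = (\<lambda>y. a y \<bullet> a x)" by (simp add: inner_commute)
        then have "(\<integral>y. a x \<bullet> a y \<partial>M) = g \<bullet> a x" using A2[of "a x"] by simp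
        then show "(\<integral>y. a x \<bullet> a y \<partial>M) = a x \<bullet> g" by (simp add: inner_commute)
      qed
      also have "\<dots> = g \<bullet> g" using A2[of g] by simp
      finally show ?thesis using hyp by (simp add: a_def)
    next
      case False
      then have "(\<integral>z. a (fst z) \<bullet> a (snd z) \<partial>(M \<Otimes>\<^sub>M M)) = 0" by (rule not_integrable_integral_eq)
      then have "lam * (L2norm M f)\<^sup>2 \<le> 0" using hyp by (simp add: a_def)
      then show ?thesis by (smt (verit) inner_ge_zero)
    qed
    then show ?thesis using lhs by (simp add: g_def)
  qed
  show ?thesis
    using BJ FR ADJ LJ UC by blast
qed
end
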